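(* Let $\rho\ge 0$ and consider the two-dimensional Poisson regression model with interaction at $\boldsymbol{\beta}=(0,-1,-1,-\rho)^\top$ on $\mathcal{X}=[0,\infty)^2$. Let $\xi$ be a design on $\mathcal{X}$ with nonsingular information matrix that is invariant under the permutation $(x_1,x_2)\mapsto(x_2,x_1)$ of the coordinates. Then the deduced sensitivity function $d(\mathbf{x};\xi)$ attains its maximum over $\mathcal{X}$ on the boundary of $\mathcal{X}$ (points with $x_1=0$ or $x_2=0$) or on the diagonal of $\mathcal{X}$ (points with $x_1=x_2$); that is, $\sup_{\mathbf{x}\in\mathcal{X}} d(\mathbf{x};\xi)=\sup\{d(\mathbf{x};\xi): \mathbf{x}\in\mathcal{X},\ x_1=0\text{ or }x_2=0\text{ or }x_1=x_2\}$.
   Context: In the model, an observation at setting $\mathbf{x}=(x_1,x_2)$ is Poisson distributed with mean $\lambda(\mathbf{x})=\exp(\mathbf{f}(\mathbf{x})^\top\boldsymbol{\beta})$, where $\mathbf{f}(\mathbf{x})=(1,x_1,x_2,x_1x_2)^\top$; with $\boldsymbol{\beta}=(0,-1,-1,-\rho)^\top$ this is $\lambda(\mathbf{x})=\exp(-x_1-x_2-\rho x_1x_2)$. A design $\xi$ is a finite collection of distinct settings $\mathbf{x}_i\in\mathcal{X}$ with weights $w_i\ge0$ summing to $1$; its information matrix is $\mathbf{M}(\xi)=\sum_i w_i\lambda(\mathbf{x}_i)\mathbf{f}(\mathbf{x}_i)\mathbf{f}(\mathbf{x}_i)^\top$. The design is invariant under permutation if the setting $(x_2,x_1)$ carries the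 same weight as $(x_1,x_2)$ for every setting. The deduced sensitivity function is $d(\mathbf{x};\xi)=\mathbf{f}(\mathbf{x})^\top\mathbf{M}(\xi)^{-1}\mathbf{f}(\mathbf{x})/p-1/\lambda(\mathbf{x})$ with $p=4$. *)

theory Defs
  imports "HOL-Analysis.Analysis"
begin

definition fvec :: "real \<times> real \<Rightarrow> real^4" where
  "fvec x = vector [1, fst x, snd x, fst x * snd x]"

text \<open>Intensity lambda(x) = exp(f(x)^T beta) with beta = (0,-1,-1,-rho).\<close>
definition lam :: "real \<Rightarrow> real \<times> real \<Rightarrow> real" where
  "lam \<rho> x = exp (- fst x - snd x - \<rho> * fst x * snd x)"

definition Xdom :: "(real \<times> real) set" where
  "Xdom = {x. 0 \<le> fst x \<and> 0 \<le> snd x}"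

definition is_design :: "(real \<times> real) set \<Rightarrow> (real \<times> real \<Rightarrow> real) \<Rightarrow> bool" where
  "is_design S w \<longleftrightarrow> finite S \<and> S \<subseteq> Xdom \<and> (\<forall>x\<in>S. 0 \<le> w x) \<and> sum w S = 1"

definition info_mat :: "real \<Rightarrow> (real \<times> real) set \<Rightarrow> (real \<times> real \<Rightarrow> real) \<Rightarrow> real^4^4" where
  "info_mat \<rho> S w = (\<Sum>x\<in>S. (w x * lam \<rho> x) *\<^sub>R (\<chi> i j. fvec x $ i * fvec x $ j))"

definition perm_invariant :: "(real \<times> real) set \<Rightarrow> (real \<times> real \<Rightarrow> real) \<Rightarrow> bool" where
  "perm_invariant S w \<longleftrightarrow> (\<forall>x\<in>S. (snd x, fst x) \<in> S \<and> w (snd x, fst x) = w x)"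

text \<open>Deduced sensitivity function d(x;xi) = f(x)^T M^{-1} f(x)/p - 1/lambda(x), p = 4.\<close>
definition sens :: "real \<Rightarrow> (real \<times> real) set \<Rightarrow> (real \<times> real \<Rightarrow> real) \<Rightarrow> real \<times> real \<Rightarrow> real" where
  "sens \<rho> S w x = (fvec x \<bullet> (matrix_inv (info_mat \<rho> S w) *v fvec x)) / 4 - 1 / lam \<rho> x"

end

theory Submission
  imports Defs
begin

lemma vec4_nth [simp]:
  "(vector [a,b,c,d] :: real^4) $ 1 = a"
  "(vector [a,b,c,d] :: real^4) $ 2 = b"
  "(vector [a,b,c,d] :: real^4) $ 3 = c"
  "(vector [a,b,c,d] :: real^4) $ 4 = d"
  unfolding vector_def by simp_all

definition pv :: "real^4 \<Rightarrow> real^4" where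
  "pv y = vector [y$1, y$3, y$2, y$4]"

definition sw :: "real \<times> real \<Rightarrow> real \<times> real" where
  "sw x = (snd x, fst x)"

lemma fvec_sw: "fvec (sw x) = pv (fvec x)"
  by (simp add: vec_eq_iff forall_4 fvec_def pv_def sw_def mult.commute)

lemma pv_inner: "pv y \<bullet> z = y \<bullet> pv z"
  by (simp add: inner_vec_def sum_4 pv_def)

lemma pv_pv: "pv (pv y) = y"
  by (simp add: vec_eq_iff forall_4 pv_def)

lemma pv_sum: "pv (\<Sum>x\<in>S. (c x) *\<^sub>R u x) = (\<Sum>x\<in>S. (c x) *\<^sub>R pv (u x))"
  by (simp add: vec_eq_iff forall_4 pv_def sum_component)

lemma Mv:
  "info_mat \<rho> S w *v y = (\<Sum>x\<in>S. (w x * lam \<rho> x * (fvec x \<bullet> y)) *\<^sub>R fvec x)"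
  by (simp add: vec_eq_iff info_mat_def matrix_vector_mult_def sum_component inner_vec_def
      sum_distrib_left sum_distrib_right sum.swap[of _ S] algebra_simps)

lemma lam_sw: "lam \<rho> (sw x) = lam \<rho> x"
  by (simp add: lam_def sw_def algebra_simps)

lemma Mv_pv:
  assumes "perm_invariant S w"
  shows "info_mat \<rho> S w *v pv y = pv (info_mat \<rho> S w *v y)"
proof -
  have "info_mat \<rho> S w *v pv y = (\<Sum>x\<in>S. (w x * lam \<rho> x * (fvec (sw x) \<bullet> y)) *\<^sub>R fvec x)"
    by (simp add: Mv fvec_sw pv_inner)
  also have "\<dots> = (\<Sum>x\<in>S. (w x * lam \<rho> x * (fvec x \<bullet> y)) *\<^sub>R fvec (sw x))"
  proof (rule sum.reindex_bij_witness[of _ sw sw])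
    fix a assume "a \<in> S" thus "sw (sw a) = a" "sw a \<in> S"
      using assms by (auto simp: sw_def perm_invariant_def)
  next
    fix a assume "a \<in> S" thus "sw (sw a) = a" "sw a \<in> S"
      using assms by (auto simp: sw_def perm_invariant_def)
  next
    fix a assume "a \<in> S"
    then have "w (sw a) = w a" using assms by (auto simp: sw_def perm_invariant_def)
    moreover have "sw (sw a) = a" by (simp add: sw_def)
    ultimately show "(w (sw a) * lam \<rho> (sw a) * (fvec (sw a) \<bullet> y)) *\<^sub>R fvec (sw (sw a)) =
      (w a * lam \<rho> a * (fvec (sw a) \<bullet> y)) *\<^sub>R fvec a" 
      by (simp add: lam_sw)
  qed
  also have "\<dots> = pv (info_mat \<rho> S w *v y)"
    by (simp add: Mv pv_sum fvec_sw)
  finally show ?thesis .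
qed

lemma inv_props:
  assumes "invertible M"
  shows "M ** matrix_inv M = mat 1" "matrix_inv M ** M = mat 1"
  using someI_ex[OF assms[unfolded invertible_def]] unfolding matrix_inv_def by auto

lemma q_sw:
  assumes "perm_invariant S w" "invertible (info_mat \<rho> S w)"
  shows "fvec (sw z) \<bullet> (matrix_inv (info_mat \<rho> S w) *v fvec (sw z))
       = fvec z \<bullet> (matrix_inv (info_mat \<rho> S w) *v fvec z)"
proof -
  define M where "M = info_mat \<rho> S w"
  define A where "A = matrix_inv M"
  have MA: "M ** A = mat 1" "A ** M = mat 1" using inv_props assms(2) by (auto simp: M_def A_def)
  have "M *v pv (A *v fvec z) = pv (M *v (A *v fvec z))"
    using Mv_pv[OF assms(1)] by (simp add: M_def)
  also have "\<dots> = pv (fvec z)" by (simp add: matrix_vector_mul_assoc MA)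
  finally have "A *v (M *v pv (A *v fvec z)) = A *v pv (fvec z)" by simp
  hence "A *v pv (fvec z) = pv (A *v fvec z)" by (simp add: matrix_vector_mul_assoc MA)
  thus ?thesis by (simp add: fvec_sw M_def[symmetric] A_def[symmetric] pv_inner pv_pv)
qed

lemma A_psd:
  assumes "is_design S w" "invertible (info_mat \<rho> S w)"
  shows "0 \<le> e \<bullet> (matrix_inv (info_mat \<rho> S w) *v e)"
proof -
  define M where "M = info_mat \<rho> S w"
  define A where "A = matrix_inv M"
  have MA: "M ** A = mat 1" "A ** M = mat 1" using inv_props assms(2) by (auto simp: M_def A_def)
  define y where "y = A *v e"
  have "e = M *v y" by (simp add: y_def matrix_vector_mul_assoc MA)
  hence "e \<bullet> y = (\<Sum>x\<in>S. w x * lam \<rho> x * (fvec x \<bullet> y) * (fvec x \<bullet> y))"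
    by (simp add: M_def Mv inner_sum_left)
  also have "\<dots> \<ge> 0"
  proof (intro sum_nonneg)
    fix x assume "x \<in> S"
    hence "0 \<le> w x" using assms(1) by (auto simp: is_design_def)
    moreover have "0 \<le> lam \<rho> x" by (simp add: lam_def)
    ultimately have "0 \<le> (w x * lam \<rho> x) * ((fvec x \<bullet> y) * (fvec x \<bullet> y))"
      by (rule mult_nonneg_nonneg[OF mult_nonneg_nonneg zero_le_square])
    thus "0 \<le> w x * lam \<rho> x * (fvec x \<bullet> y) * (fvec x \<bullet> y)" by (simp add: mult.assoc)
  qed
  finally show ?thesis by (simp add: y_def A_def M_def)
qed

definition RR :: "real \<Rightarrow> real \<Rightarrow> real \<Rightarrow> real \<Rightarrow> real \<Rightarrow> real \<Rightarrow> real \<Rightarrow> real \<Rightarrow> real" where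
  "RR c0 c1 c2 c3 c4 c5 s t = c0 + c1* s + c2* s* s + c3* t + c4* s* t + c5* t* t"

lemma q_expand:
  fixes A :: "real^4^4"
  shows "fvec z \<bullet> (A *v fvec z) + fvec (sw z) \<bullet> (A *v fvec (sw z)) =
    RR (2* A$1$1) (A$1$2+A$2$1+A$1$3+A$3$1) (A$2$2+A$3$3)
       (2* A$1$4+2* A$4$1+2* A$2$3+2* A$3$2-2* A$2$2-2* A$3$3)
       (A$2$4+A$4$2+A$3$4+A$4$3) (2* A$4$4) (fst z + snd z) (fst z * snd z)"
  by (simp add: RR_def inner_vec_def matrix_vector_mult_def sum_4 fvec_def sw_def algebra_simps)

lemma alpha_expand:
  fixes A :: "real^4^4"
  shows "(vector [0,-\<rho>,0,1] :: real^4) \<bullet> (A *v vector [0,-\<rho>,0,1])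
       + (vector [0,0,-\<rho>,1] :: real^4) \<bullet> (A *v vector [0,0,-\<rho>,1]) =
    (A$2$2+A$3$3)* \<rho>* \<rho> - (A$2$4+A$4$2+A$3$4+A$4$3)* \<rho> + 2* A$4$4"
  by (simp add: inner_vec_def matrix_vector_mult_def sum_4 algebra_simps)

lemma core:
  fixes \<rho> s0 t0 \<tau>1 \<tau>2 :: real
  assumes "0 \<le> c2* \<rho>* \<rho> - c4* \<rho> + c5" "\<tau>1 \<le> 0" "0 \<le> \<tau>2"
  shows "RR c0 c1 c2 c3 c4 c5 s0 t0 \<le> max (RR c0 c1 c2 c3 c4 c5 (s0+\<rho>* \<tau>1) (t0-\<tau>1))
            (RR c0 c1 c2 c3 c4 c5 (s0+\<rho>* \<tau>2) (t0-\<tau>2))"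
proof -
  define \<alpha> where "\<alpha> = c2* \<rho>* \<rho> - c4* \<rho> + c5"
  define \<beta> where "\<beta> = c1* \<rho> + 2* c2* s0* \<rho> - c3 + c4* (\<rho>* t0 - s0) - 2* c5* t0"
  have id: "RR c0 c1 c2 c3 c4 c5 (s0+\<rho>* \<tau>) (t0-\<tau>) = RR c0 c1 c2 c3 c4 c5 s0 t0 + \<tau>* (\<beta>+\<alpha>* \<tau>)" for \<tau>
    by (simp add: RR_def \<alpha>_def \<beta>_def algebra_simps)
  have a: "0 \<le> \<alpha>" using assms(1) by (simp add: \<alpha>_def)
  show ?thesis
  proof (cases "0 \<le> \<beta>")
    case True
    hence "0 \<le> \<tau>2* (\<beta>+\<alpha>* \<tau>2)" using a assms by (intro mult_nonneg_nonneg) auto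
    thus ?thesis unfolding id by linarith
  next
    case False
    have "\<alpha>* \<tau>1 \<le> 0" using a assms by (simp add: mult_nonneg_nonpos)
    hence "0 \<le> \<tau>1* (\<beta>+\<alpha>* \<tau>1)" using False assms by (intro mult_nonpos_nonpos) auto
    thus ?thesis unfolding id by linarith
  qed
qed

lemma inv_lam: "1 / lam \<rho> z = exp (fst z + snd z + \<rho> * fst z * snd z)"
proof -
  have "lam \<rho> z = exp (- (fst z + snd z + \<rho> * fst z * snd z))" by (simp add: lam_def algebra_simps)
  thus ?thesis by (simp only: exp_minus divide_inverse inverse_inverse_eq mult_1_left)
qed

lemma pointwise:
  fixes \<rho> :: real and S :: "(real \<times> real) set" and w :: "real \<times> real \<Rightarrow> real"
  assumes "0 \<le> \<rho>"
    and "is_design S w"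
    and "invertible (info_mat \<rho> S w)"
    and "perm_invariant S w"
    and "x \<in> Xdom"
  shows "\<exists>y\<in>{x\<in>Xdom. fst x = 0 \<or> snd x = 0 \<or> fst x = snd x}. sens \<rho> S w x \<le> sens \<rho> S w y"
proof -
  obtain a b where x: "x = (a, b)" by (cases x)
  have ab: "0 \<le> a" "0 \<le> b" using assms(5) by (auto simp: x Xdom_def)
  define u where "u = a + b + \<rho> * a * b"
  have u0: "0 \<le> u" using ab assms(1) by (simp add: u_def)
  have "\<exists>c\<ge>0. c \<le> u/2 \<and> 2 * c + \<rho> * c * c = u"
  proof (rule IVT')
    show "2 * 0 + \<rho> * 0 * 0 \<le> u" using u0 by simp
    have "0 \<le> \<rho> * (u/2) * (u/2)" using u0 assms(1) by simp
    thus "u \<le> 2 * (u/2) + \<rho> * (u/2) * (u/2)" by simp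
    show "0 \<le> u/2" using u0 by simp
    show "continuous_on {0..u/2} (\<lambda>c. 2 * c + \<rho> * c * c)" by (intro continuous_intros)
  qed
  then obtain c where c: "0 \<le> c" "2 * c + \<rho> * c * c = u" by blast
  have cab: "a * b \<le> c * c"
  proof (rule ccontr)
    assume "\<not> a * b \<le> c * c"
    hence lt: "c * c < a * b" by simp
    have "4 * (a * b) \<le> (a + b) * (a + b)" using sum_squares_ge_zero[of "a-b" 0]
      by (simp add: algebra_simps)
    have "2 * c < a + b"
    proof (rule ccontr)
      assume "\<not> 2 * c < a + b"
      hence "a + b \<le> 2 * c" by simp
      hence "(a + b) * (a + b) \<le> (2 * c) * (2 * c)" using ab by (intro mult_mono) auto
      thus False using lt \<open>4 * (a * b) \<le> (a + b) * (a + b)\<close> by simp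
    qed
    moreover have "\<rho> * (c * c) \<le> \<rho> * (a * b)" using lt assms(1) by (intro mult_left_mono) auto
    ultimately show False using c(2) u_def by (simp add: mult.assoc)
  qed
  define M where "M = info_mat \<rho> S w"
  define A where "A = matrix_inv M"
  define q where "q z = fvec z \<bullet> (A *v fvec z)" for z
  define Rf where "Rf = RR (2* A$1$1) (A$1$2+A$2$1+A$1$3+A$3$1) (A$2$2+A$3$3)
       (2* A$1$4+2* A$4$1+2* A$2$3+2* A$3$2-2* A$2$2-2* A$3$3)
       (A$2$4+A$4$2+A$3$4+A$4$3) (2* A$4$4)"
  have q2: "2 * q z = Rf (fst z + snd z) (fst z * snd z)" for z
    using q_expand[of z A] q_sw[OF assms(4) assms(3), of z]
    by (simp add: q_def Rf_def A_def M_def)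
  have "0 \<le> (vector [0,-\<rho>,0,1] :: real^4) \<bullet> (A *v vector [0,-\<rho>,0,1])
       + (vector [0,0,-\<rho>,1] :: real^4) \<bullet> (A *v vector [0,0,-\<rho>,1])"
    using A_psd[OF assms(2) assms(3)] by (simp add: A_def M_def add_nonneg_nonneg)
  hence al: "0 \<le> (A$2$2+A$3$3)* \<rho>* \<rho> - (A$2$4+A$4$2+A$3$4+A$4$3)* \<rho> + 2* A$4$4"
    by (simp add: alpha_expand)
  have cr: "Rf (a+b) (a*b) \<le> max (Rf ((a+b)+\<rho>* (a*b - c*c)) (a*b-(a*b - c*c)))
            (Rf ((a+b)+\<rho>* (a*b)) (a*b-a*b))"
    unfolding Rf_def by (rule core[OF al]) (use cab ab in auto)
  have e1: "(a+b)+\<rho>* (a*b - c*c) = c + c" "a*b-(a*b - c*c) = c * c"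
    using c(2) u_def by (auto simp: algebra_simps)
  have e2: "(a+b)+\<rho>* (a*b) = u + 0" "a*b-a*b = u * 0" by (auto simp: u_def algebra_simps)
  have sens_eq: "sens \<rho> S w z = Rf (fst z + snd z) (fst z * snd z) / 8 - exp (fst z + snd z + \<rho> * fst z * snd z)" for z
  proof -
    have "sens \<rho> S w z = q z / 4 - exp (fst z + snd z + \<rho> * fst z * snd z)"
      by (simp add: sens_def inv_lam q_def A_def M_def)
    thus ?thesis using q2[of z] by simp
  qed
  have ex1: "c + c + \<rho> * c * c = u" using c(2) by simp
  have ex2: "u + 0 + \<rho> * u * 0 = u" by simp
  have sx: "sens \<rho> S w x = Rf (a+b) (a*b) / 8 - exp u" by (simp add: sens_eq x u_def)
  have s1: "sens \<rho> S w (c,c) = Rf (c+c) (c*c) / 8 - exp u" using sens_eq[of "(c,c)"] ex1 by simp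
  have s2: "sens \<rho> S w (u,0) = Rf (u+0) (u*0) / 8 - exp u" using sens_eq[of "(u,0)"] by simp
  have mem1: "(c,c) \<in> {x\<in>Xdom. fst x = 0 \<or> snd x = 0 \<or> fst x = snd x}" using c by (simp add: Xdom_def)
  have mem2: "(u,0) \<in> {x\<in>Xdom. fst x = 0 \<or> snd x = 0 \<or> fst x = snd x}" using u0 by (simp add: Xdom_def)
  from cr e1 e2 have "Rf (a+b) (a*b) \<le> Rf (c+c) (c*c) \<or> Rf (a+b) (a*b) \<le> Rf (u+0) (u*0)"
    by (simp add: max_def split: if_splits)
  thus ?thesis
  proof
    assume "Rf (a+b) (a*b) \<le> Rf (c+c) (c*c)"
    hence "sens \<rho> S w x \<le> sens \<rho> S w (c,c)" using sx s1 by simp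
    thus ?thesis using mem1 by blast
  next
    assume "Rf (a+b) (a*b) \<le> Rf (u+0) (u*0)"
    hence "sens \<rho> S w x \<le> sens \<rho> S w (u,0)" using sx s2 by simp
    thus ?thesis using mem2 by blast
  qed
qed

theorem lemma2:
  fixes \<rho> :: real and S :: "(real \<times> real) set" and w :: "real \<times> real \<Rightarrow> real"
  assumes "0 \<le> \<rho>"
    and "is_design S w"
    and "invertible (info_mat \<rho> S w)"
    and "perm_invariant S w"
  shows "(SUP x\<in>Xdom. ereal (sens \<rho> S w x)) =
         (SUP x\<in>{x\<in>Xdom. fst x = 0 \<or> snd x = 0 \<or> fst x = snd x}. ereal (sens \<rho> S w x))"
proof (rule antisym)
  show "(SUP x\<in>Xdom. ereal (sens \<rho> S w x)) \<le>
         (SUP x\<in>{x\<in>Xdom. fst x = 0 \<or> snd x = 0 \<or> fst x = snd x}. ereal (sens \<rho> S w x))"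
  proof (rule SUP_mono)
    fix x assume "x \<in> Xdom"
    thus "\<exists>y\<in>{x\<in>Xdom. fst x = 0 \<or> snd x = 0 \<or> fst x = snd x}. ereal (sens \<rho> S w x) \<le> ereal (sens \<rho> S w y)"
      using pointwise[OF assms] by simp
  qed
  show "(SUP x\<in>{x\<in>Xdom. fst x = 0 \<or> snd x = 0 \<or> fst x = snd x}. ereal (sens \<rho> S w x))
        \<le> (SUP x\<in>Xdom. ereal (sens \<rho> S w x))"
    by (rule SUP_subset_mono) auto
qed

end
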